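(* Assume $\|\hat F'(y)-\hat F'(x)\|_F\le L_{\hat F}\|y-x\|$ for all $x,y\in\mathcal F$. Let $x\in\mathcal F$, $\tau>0$, $L\ge L_{\hat F}$, and suppose $T_{L,\tau}(x)\in\mathcal F$. Then for every $r>0$, $$\frac\tau2+\frac{\hat f_2(x)}{2\tau}-\hat f_1(T_{L,\tau}(x))\ge Lr^2\varkappa\Big(\frac{\Delta_r(x)}{2\tau Lr^2}\Big),$$ where $\Delta_r(x)=\hat f_2(x)-\min_{y}\{\|\hat F(x)+\hat F'(x)(y-x)\|^2:\|y-x\|\le r\}$ and $\varkappa(t)=\frac{t^2}2$ for $t\in[0,1]$, $\varkappa(t)=t-\frac12$ for $t>1$.
   Context: Let $F:\mathbb R^n\to\mathbb R^m$ be smooth, $\hat F=\frac1{\sqrt m}F$ with Jacobian $\hat F'(x)$; Euclidean norms, $\|\cdot\|_F$ Frobenius norm; $\mathcal F\subseteq\mathbb R^n$ closed convex with nonempty interior. $\hat f_1(x)=\|\hat F(x)\|$, $\hat f_2=\hat f_1^2$, $\psi_{x,L,\tau}(y)=\frac\tau2+\frac1{2\tau}\|\hat F(x)+\hat F'(x)(y-x)\|^2+\frac L2\|y-x\|^2$, and $T_{L,\tau}(x)=\arg\min_{y\in\mathbb R^n}\psi_{x,L,\tau}(y)$. *)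

theory Defs
  imports "HOL-Analysis.Analysis"
begin

definition frob_norm :: "real^'n^'m \<Rightarrow> real" where
  "frob_norm A = sqrt (\<Sum>i\<in>UNIV. \<Sum>j\<in>UNIV. (A $ i $ j)\<^sup>2)"

definition Fhat :: "(real^'n \<Rightarrow> real^'m) \<Rightarrow> real^'n \<Rightarrow> real^'m" where
  "Fhat F x = (1 / sqrt (real CARD('m))) *\<^sub>R F x"

definition Jhat :: "(real^'n \<Rightarrow> real^'n^'m) \<Rightarrow> real^'n \<Rightarrow> real^'n^'m" where
  "Jhat J x = (1 / sqrt (real CARD('m))) *\<^sub>R J x"

definition f1hat :: "(real^'n \<Rightarrow> real^'m) \<Rightarrow> real^'n \<Rightarrow> real" where
  "f1hat F x = norm (Fhat F x)"

definition f2hat :: "(real^'n \<Rightarrow> real^'m) \<Rightarrow> real^'n \<Rightarrow> real" where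
  "f2hat F x = (f1hat F x)\<^sup>2"

definition psi :: "(real^'n \<Rightarrow> real^'m) \<Rightarrow> (real^'n \<Rightarrow> real^'n^'m) \<Rightarrow>
    real^'n \<Rightarrow> real \<Rightarrow> real \<Rightarrow> real^'n \<Rightarrow> real" where
  "psi F J x L \<tau> y = \<tau> / 2 + (1 / (2 * \<tau>)) * (norm (Fhat F x + Jhat J x *v (y - x)))\<^sup>2
      + L / 2 * (norm (y - x))\<^sup>2"

definition Tmap :: "(real^'n \<Rightarrow> real^'m) \<Rightarrow> (real^'n \<Rightarrow> real^'n^'m) \<Rightarrow>
    real \<Rightarrow> real \<Rightarrow> real^'n \<Rightarrow> real^'n" where
  "Tmap F J L \<tau> x = (THE y. \<forall>z. psi F J x L \<tau> y \<le> psi F J x L \<tau> z)"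

definition Delta :: "(real^'n \<Rightarrow> real^'m) \<Rightarrow> (real^'n \<Rightarrow> real^'n^'m) \<Rightarrow>
    real \<Rightarrow> real^'n \<Rightarrow> real" where
  "Delta F J r x = f2hat F x
     - Inf ((\<lambda>y. (norm (Fhat F x + Jhat J x *v (y - x)))\<^sup>2) ` cball x r)"

definition kappa :: "real \<Rightarrow> real" where
  "kappa t = (if t \<le> 1 then t\<^sup>2 / 2 else t - 1 / 2)"

end

theory Submission
  imports Defs
begin
lemma norm_sq_vec: "(norm (w::real^'k))\<^sup>2 = (\<Sum>i\<in>UNIV. (w$i)\<^sup>2)"
  unfolding power2_norm_eq_inner inner_vec_def by (simp add: power2_eq_square)

lemma frob_bound: "norm ((A::real^'n^'m) *v v) \<le> frob_norm A * norm v"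
proof -
  have row: "(A *v v)$i = inner (A$i) v" for i
    by (simp add: matrix_vector_mult_def inner_vec_def)
  have "(norm (A *v v))\<^sup>2 = (\<Sum>i\<in>UNIV. (inner (A$i) v)\<^sup>2)"
    by (simp add: norm_sq_vec row)
  also have "\<dots> \<le> (\<Sum>i\<in>UNIV. (norm (A$i))\<^sup>2 * (norm v)\<^sup>2)"
  proof (rule sum_mono)
    fix i
    have "\<bar>inner (A$i) v\<bar> \<le> norm (A$i) * norm v" by (rule Cauchy_Schwarz_ineq2)
    then show "(inner (A$i) v)\<^sup>2 \<le> (norm (A$i))\<^sup>2 * (norm v)\<^sup>2"
      by (metis abs_ge_zero power2_abs power_mono power_mult_distrib)
  qed
  also have "\<dots> = (frob_norm A * norm v)\<^sup>2"
    by (simp add: frob_norm_def power_mult_distrib norm_sq_vec sum_distrib_right sum_nonneg)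
  finally have "(norm (A *v v))\<^sup>2 \<le> (frob_norm A * norm v)\<^sup>2" .
  moreover have "frob_norm A * norm v \<ge> 0" by (simp add: frob_norm_def sum_nonneg)
  ultimately show ?thesis using power2_le_imp_le by blast
qed

lemma scaleR_mv: "((c::real) *\<^sub>R (A::real^'n^'m)) *v h = c *\<^sub>R (A *v h)"
  by (simp add: vec_eq_iff matrix_vector_mult_def sum_distrib_left mult.assoc)

lemma Fhat_deriv:
  assumes "\<And>z. (F has_derivative (\<lambda>h. J z *v h)) (at z)"
  shows "(Fhat F has_derivative (\<lambda>h. Jhat J z *v h)) (at z)"
proof -
  have "((\<lambda>x. (1 / sqrt (real CARD('m))) *\<^sub>R F x) has_derivative
        (\<lambda>h. (1 / sqrt (real CARD('m))) *\<^sub>R (J z *v h))) (at z)"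
    by (intro has_derivative_scaleR_right assms)
  then show ?thesis
    by (simp add: Fhat_def[abs_def] Jhat_def scaleR_mv)
qed

lemma taylor_bound:
  fixes F :: "real^'n \<Rightarrow> real^'m" and J :: "real^'n \<Rightarrow> real^'n^'m"
  assumes deriv: "\<And>z. (F has_derivative (\<lambda>h. J z *v h)) (at z)"
    and cvx: "convex S"
    and lip: "\<forall>u\<in>S. \<forall>v\<in>S. frob_norm (Jhat J v - Jhat J u) \<le> LF * norm (v - u)"
    and xS: "x \<in> S" and yS: "y \<in> S"
  shows "norm (Fhat F y - Fhat F x - Jhat J x *v (y - x)) \<le> LF / 2 * (norm (y - x))\<^sup>2"
proof -
  define h where "h = y - x"
  define g where "g t = Fhat F (x + t *\<^sub>R h) - t *\<^sub>R (Jhat J x *v h)" for t :: real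
  define e where "e = g 1 - g 0"
  have e_eq: "e = Fhat F y - Fhat F x - Jhat J x *v (y - x)"
    by (simp add: e_def g_def h_def)
  define \<phi> where "\<phi> t = inner e (g t) - LF / 2 * t\<^sup>2 * (norm h)\<^sup>2 * norm e" for t
  have dg: "(g has_derivative (\<lambda>s. s *\<^sub>R ((Jhat J (x + t *\<^sub>R h) - Jhat J x) *v h))) (at t)" for t
  proof -
    have 1: "((\<lambda>t. x + t *\<^sub>R h) has_derivative (\<lambda>s. s *\<^sub>R h)) (at t)"
      by (auto intro!: derivative_eq_intros)
    have 2: "((\<lambda>t. Fhat F (x + t *\<^sub>R h)) has_derivative (\<lambda>s. Jhat J (x + t *\<^sub>R h) *v (s *\<^sub>R h))) (at t)"
      using has_derivative_compose[OF 1 Fhat_deriv[OF deriv]] .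
    have 3: "((\<lambda>t. t *\<^sub>R (Jhat J x *v h)) has_derivative (\<lambda>s. s *\<^sub>R (Jhat J x *v h))) (at t)"
      by (auto intro!: derivative_eq_intros)
    show ?thesis unfolding g_def
      using has_derivative_diff[OF 2 3]
      by (simp add: matrix_vector_mult_scaleR matrix_vector_mult_diff_rdistrib scaleR_diff_right)
  qed
  have dphi: "(\<phi> has_real_derivative
      (inner e ((Jhat J (x + t *\<^sub>R h) - Jhat J x) *v h) - LF * t * (norm h)\<^sup>2 * norm e)) (at t)" for t
  proof -
    have a: "((\<lambda>t. inner e (g t)) has_derivative (\<lambda>s. inner e (s *\<^sub>R ((Jhat J (x + t *\<^sub>R h) - Jhat J x) *v h)))) (at t)"
      by (rule has_derivative_inner_right[OF dg])
    have b: "((\<lambda>t. LF / 2 * t\<^sup>2 * (norm h)\<^sup>2 * norm e) has_derivative (\<lambda>s. s * (LF * t * (norm h)\<^sup>2 * norm e))) (at t)"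
      by (auto intro!: derivative_eq_intros simp: algebra_simps)
    have "(\<phi> has_derivative (\<lambda>s. (inner e ((Jhat J (x + t *\<^sub>R h) - Jhat J x) *v h) - LF * t * (norm h)\<^sup>2 * norm e) * s)) (at t)"
      unfolding \<phi>_def using has_derivative_diff[OF a b] by (simp add: algebra_simps)
    then show ?thesis by (simp add: has_field_derivative_def)
  qed
  have le: "inner e ((Jhat J (x + t *\<^sub>R h) - Jhat J x) *v h) - LF * t * (norm h)\<^sup>2 * norm e \<le> 0"
    if t: "0 \<le> t" "t \<le> 1" for t
  proof -
    have xt: "x + t *\<^sub>R h \<in> S"
    proof -
      have "(1 - t) *\<^sub>R x + t *\<^sub>R y \<in> S" using convexD[OF cvx xS yS, of "1 - t" t] t by simp
      moreover have "(1 - t) *\<^sub>R x + t *\<^sub>R y = x + t *\<^sub>R h" by (simp add: h_def algebra_simps)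
      ultimately show ?thesis by simp
    qed
    have "inner e ((Jhat J (x + t *\<^sub>R h) - Jhat J x) *v h)
        \<le> norm e * norm ((Jhat J (x + t *\<^sub>R h) - Jhat J x) *v h)"
      by (rule norm_cauchy_schwarz)
    also have "\<dots> \<le> norm e * (frob_norm (Jhat J (x + t *\<^sub>R h) - Jhat J x) * norm h)"
      by (intro mult_left_mono frob_bound) auto
    also have "\<dots> \<le> norm e * (LF * norm (t *\<^sub>R h) * norm h)"
    proof -
      have "frob_norm (Jhat J (x + t *\<^sub>R h) - Jhat J x) \<le> LF * norm (t *\<^sub>R h)"
        using lip xt xS by (metis add_diff_cancel_left')
      then show ?thesis by (intro mult_left_mono mult_right_mono) auto
    qed
    also have "\<dots> = LF * t * (norm h)\<^sup>2 * norm e" using t by (simp add: power2_eq_square)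
    finally show ?thesis by simp
  qed
  have "\<phi> 1 \<le> \<phi> 0"
    using DERIV_nonpos_imp_nonincreasing[of 0 1 \<phi>] dphi le by fastforce
  then have "inner e (g 1) - LF / 2 * (norm h)\<^sup>2 * norm e \<le> inner e (g 0)"
    by (simp add: \<phi>_def)
  then have "inner e e \<le> LF / 2 * (norm h)\<^sup>2 * norm e"
    by (simp add: e_def inner_diff_right)
  then have key: "norm e * norm e \<le> (LF / 2 * (norm h)\<^sup>2) * norm e"
    by (simp add: norm_eq_sqrt_inner mult.commute) 
  show ?thesis
  proof (cases "e = 0")
    case True
    have "0 \<le> frob_norm (Jhat J y - Jhat J x)" by (simp add: frob_norm_def sum_nonneg)
    also have "\<dots> \<le> LF * norm h" using lip xS yS h_def by auto
    finally have "0 \<le> LF * norm h" .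
    then have "0 \<le> LF / 2 * (norm h)\<^sup>2" by (simp add: power2_eq_square mult.assoc[symmetric])
    then show ?thesis using True e_eq h_def by simp
  next
    case False
    then have "norm e > 0" by simp
    with key have "norm e \<le> LF / 2 * (norm h)\<^sup>2" by simp
    then show ?thesis using e_eq h_def by simp
  qed
qed

lemma mid_sq: "(norm ((1/2::real) *\<^sub>R (u + v :: 'a::real_inner)))\<^sup>2
   = ((norm u)\<^sup>2 + (norm v)\<^sup>2) / 2 - (norm (u - v))\<^sup>2 / 4"
  unfolding power2_norm_eq_inner
  apply (simp add: inner_add_left inner_add_right inner_diff_left inner_diff_right inner_commute algebra_simps)
  apply (simp add: field_simps)
  done

lemma psi_min_unique:
  fixes F :: "real^'n \<Rightarrow> real^'m" and J :: "real^'n \<Rightarrow> real^'n^'m"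
  assumes L: "L > 0" and tau: "\<tau> > 0"
  shows "\<exists>!y. \<forall>z. psi F J x L \<tau> y \<le> psi F J x L \<tau> z"
proof -
  let ?P = "psi F J x L \<tau>"
  have cont: "continuous_on UNIV ?P"
    unfolding psi_def by (intro continuous_intros) (auto intro!: bounded_linear.continuous_on[OF matrix_vector_mul_bounded_linear] continuous_intros)
  have Pge: "?P z \<ge> L / 2 * (norm (z - x))\<^sup>2" for z
    unfolding psi_def using tau by (auto intro!: add_nonneg_nonneg)
  have Px: "?P x > 0" unfolding psi_def using tau by (auto intro!: add_pos_nonneg)
  define R where "R = sqrt (2 * ?P x / L)"
  have R2: "L / 2 * R\<^sup>2 = ?P x" unfolding R_def using L Px by simp
  have "\<exists>y\<in>cball x R. \<forall>z\<in>cball x R. ?P y \<le> ?P z"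
    by (rule continuous_attains_inf) (use Px L R_def in \<open>auto intro: continuous_on_subset[OF cont] simp: divide_simps\<close>)
  then obtain y0 where y0: "y0 \<in> cball x R" "\<forall>z\<in>cball x R. ?P y0 \<le> ?P z" by blast
  have ex: "\<forall>z. ?P y0 \<le> ?P z"
  proof
    fix z show "?P y0 \<le> ?P z"
    proof (cases "z \<in> cball x R")
      case True then show ?thesis using y0 by auto
    next
      case False
      then have "R < norm (z - x)" by (simp add: dist_norm norm_minus_commute)
      moreover have "R \<ge> 0" unfolding R_def using Px L by simp
      ultimately have "R\<^sup>2 < (norm (z - x))\<^sup>2" by (simp add: power_strict_mono)
      then have "L / 2 * R\<^sup>2 \<le> L / 2 * (norm (z - x))\<^sup>2" using L by simp
      moreover have "x \<in> cball x R" using \<open>R \<ge> 0\<close> by simp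
      ultimately show ?thesis using R2 Pge[of z] y0(2) by fastforce
    qed
  qed
  have uniq: "y1 = y2" if h1: "\<forall>z. ?P y1 \<le> ?P z" and h2: "\<forall>z. ?P y2 \<le> ?P z" for y1 y2
  proof (rule ccontr)
    assume ne: "y1 \<noteq> y2"
    define m where "m = (1/2::real) *\<^sub>R (y1 + y2)"
    let ?a = "\<lambda>y. Fhat F x + Jhat J x *v (y - x)"
    have half: "(1/2::real) *\<^sub>R v + (1/2::real) *\<^sub>R v = v" for v :: "real^'n"
      by (simp add: scaleR_add_left[symmetric])
    have dm: "m - x = (1/2::real) *\<^sub>R ((y1 - x) + (y2 - x))"
    proof -
      have "(1/2::real) *\<^sub>R ((y1 - x) + (y2 - x)) = (1/2::real) *\<^sub>R (y1 + y2) - ((1/2::real) *\<^sub>R x + (1/2::real) *\<^sub>R x)"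
        by (simp add: scaleR_add_right scaleR_diff_right)
      then show ?thesis by (simp add: half m_def)
    qed
    have am: "?a m = (1/2::real) *\<^sub>R (?a y1 + ?a y2)"
    proof -
      have "?a m = Fhat F x + (1/2::real) *\<^sub>R (Jhat J x *v (y1 - x) + Jhat J x *v (y2 - x))"
        by (simp only: dm matrix_vector_mult_scaleR matrix_vector_right_distrib)
      also have "\<dots> = (1/2::real) *\<^sub>R (?a y1 + ?a y2)"
        proof -
          have "(1/2::real) *\<^sub>R (?a y1 + ?a y2) = ((1/2::real) *\<^sub>R Fhat F x + (1/2::real) *\<^sub>R Fhat F x) + (1/2::real) *\<^sub>R (Jhat J x *v (y1 - x) + Jhat J x *v (y2 - x))"
            by (simp add: scaleR_add_right algebra_simps)
          then show ?thesis by (simp add: half)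
        qed
      finally show ?thesis .
    qed
    have "?P m = (?P y1 + ?P y2) / 2 - (1 / (2 * \<tau>)) * (norm (?a y1 - ?a y2))\<^sup>2 / 4
                  - L / 2 * (norm (y1 - y2))\<^sup>2 / 4"
    proof -
      have e1: "(norm (?a m))\<^sup>2 = ((norm (?a y1))\<^sup>2 + (norm (?a y2))\<^sup>2)/2 - (norm (?a y1 - ?a y2))\<^sup>2/4"
        unfolding am by (rule mid_sq)
      have e2: "(norm (m - x))\<^sup>2 = ((norm (y1-x))\<^sup>2 + (norm (y2-x))\<^sup>2)/2 - (norm (y1 - y2))\<^sup>2/4"
        unfolding dm mid_sq by simp
      show ?thesis apply (simp only: psi_def e1 e2) using tau by (simp add: field_simps)
    qed
    moreover have "(1 / (2 * \<tau>)) * (norm (?a y1 - ?a y2))\<^sup>2 / 4 \<ge> 0" using tau by simp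
    moreover have "L / 2 * (norm (y1 - y2))\<^sup>2 / 4 > 0" using L ne by simp
    moreover have "?P y1 \<le> ?P y2" "?P y2 \<le> ?P y1" using h1 h2 by auto
    moreover have key: "pm < p1" if "pm = (p1+p2)/2 - A - B" "0 \<le> A" "0 < B" "p1 \<le> p2" "p2 \<le> p1"
      for pm p1 p2 A B :: real using that by (simp add: field_simps)
    ultimately have "?P m < ?P y1" by blast
    then show False using spec[OF h1, of m] by simp
  qed
  show ?thesis using ex uniq by blast
qed

lemma Tmap_min:
  assumes "L > 0" "\<tau> > 0"
  shows "psi F J x L \<tau> (Tmap F J L \<tau> x) \<le> psi F J x L \<tau> z"
  using theI'[OF psi_min_unique[OF assms, of F J x]] unfolding Tmap_def by blast

lemma convex_sq: "0 \<le> t \<Longrightarrow> t \<le> 1 \<Longrightarrow>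
  (norm ((1 - t) *\<^sub>R u + t *\<^sub>R (v::'a::real_inner)))\<^sup>2 \<le> (1 - t) * (norm u)\<^sup>2 + t * (norm v)\<^sup>2"
proof -
  assume t: "0 \<le> t" "t \<le> 1"
  have "(1 - t) * (norm u)\<^sup>2 + t * (norm v)\<^sup>2 - (norm ((1 - t) *\<^sub>R u + t *\<^sub>R v))\<^sup>2
        = t * (1 - t) * (norm (u - v))\<^sup>2"
    unfolding power2_norm_eq_inner
    by (simp add: inner_add_left inner_add_right inner_diff_left inner_diff_right inner_commute algebra_simps)
  moreover have "t * (1 - t) * (norm (u - v))\<^sup>2 \<ge> 0" using t by simp
  ultimately show ?thesis by linarith
qed

theorem lemma3:
  fixes F :: "real^'n \<Rightarrow> real^'m" and J :: "real^'n \<Rightarrow> real^'n^'m"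
    and \<F> :: "(real^'n) set" and LF L \<tau> :: real and x :: "real^'n"
  assumes deriv: "\<And>z. (F has_derivative (\<lambda>h. J z *v h)) (at z)"
    and J_cont: "continuous_on UNIV J"
    and F_closed: "closed \<F>" and F_convex: "convex \<F>" and F_int: "interior \<F> \<noteq> {}"
    and lip: "\<forall>u\<in>\<F>. \<forall>v\<in>\<F>. frob_norm (Jhat J v - Jhat J u) \<le> LF * norm (v - u)"
    and x_in: "x \<in> \<F>" and tau_pos: "\<tau> > 0" and L_ge: "L \<ge> LF" and L_pos: "L > 0"
    and T_in: "Tmap F J L \<tau> x \<in> \<F>"
  shows "\<forall>r>0. \<tau> / 2 + f2hat F x / (2 * \<tau>) - f1hat F (Tmap F J L \<tau> x)
            \<ge> L * r\<^sup>2 * kappa (Delta F J r x / (2 * \<tau> * L * r\<^sup>2))"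
proof (intro allI impI)
  fix r :: real assume r: "r > 0"
  define T where "T = Tmap F J L \<tau> x"
  define a where "a y = Fhat F x + Jhat J x *v (y - x)" for y
  define g where "g y = (norm (a y))\<^sup>2" for y
  have f2: "f2hat F x = g x" by (simp add: f2hat_def f1hat_def g_def a_def)
  have f1T: "f1hat F T \<le> psi F J x L \<tau> T"
  proof -
    have tb: "norm (Fhat F T - Fhat F x - Jhat J x *v (T - x)) \<le> LF / 2 * (norm (T - x))\<^sup>2"
      using taylor_bound[OF deriv F_convex lip x_in] T_in T_def by blast
    have "f1hat F T \<le> norm (a T) + norm (Fhat F T - Fhat F x - Jhat J x *v (T - x))"
      unfolding f1hat_def a_def using norm_triangle_ineq[of "Fhat F x + Jhat J x *v (T - x)" "Fhat F T - Fhat F x - Jhat J x *v (T - x)"]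
      by simp
    also have "\<dots> \<le> norm (a T) + L / 2 * (norm (T - x))\<^sup>2"
      using tb L_ge by (smt (verit) mult_right_mono zero_le_power2 divide_right_mono)
    also have "norm (a T) \<le> \<tau> / 2 + (norm (a T))\<^sup>2 / (2 * \<tau>)"
    proof -
      have "0 \<le> (norm (a T) - \<tau>)\<^sup>2" by simp
      then have "2 * \<tau> * norm (a T) \<le> \<tau>\<^sup>2 + (norm (a T))\<^sup>2" by (simp add: power2_diff algebra_simps)
      then show ?thesis using tau_pos by (simp add: field_simps power2_eq_square)
    qed
    then have "norm (a T) + L / 2 * (norm (T - x))\<^sup>2 \<le> psi F J x L \<tau> T"
      unfolding psi_def a_def by simp
    finally show ?thesis .
  qed
  have lowb: "\<tau> / 2 + f2hat F x / (2 * \<tau>) - f1hat F T \<ge> (g x - g y) / (2 * \<tau>) - L / 2 * (norm (y - x))\<^sup>2" for y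
  proof -
    have "psi F J x L \<tau> T \<le> psi F J x L \<tau> y" unfolding T_def by (rule Tmap_min[OF L_pos tau_pos])
    with f1T f2 show ?thesis unfolding psi_def g_def a_def by (simp add: diff_divide_distrib)
  qed
  have contg: "continuous_on (cball x r) g"
    unfolding g_def a_def
    by (intro continuous_intros bounded_linear.continuous_on[OF matrix_vector_mul_bounded_linear])
  obtain ys where ys: "ys \<in> cball x r" "\<forall>z\<in>cball x r. g ys \<le> g z"
    using continuous_attains_inf[OF compact_cball _ contg] r by fastforce
  have InfEq: "Inf (g ` cball x r) = g ys"
    by (rule cInf_eq_minimum) (use ys in auto)
  define D where "D = g x - g ys"
  have Deq: "Delta F J r x = D"
  proof -
    have "Delta F J r x = f2hat F x - Inf (g ` cball x r)" unfolding Delta_def g_def a_def by simp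
    then show ?thesis using f2 InfEq D_def by simp
  qed
  have D0: "D \<ge> 0" unfolding D_def using ys r by simp
  have nys: "norm (ys - x) \<le> r" using ys by (simp add: dist_norm norm_minus_commute)
  have stepb: "\<tau> / 2 + f2hat F x / (2 * \<tau>) - f1hat F T \<ge> t * D / (2 * \<tau>) - L / 2 * t\<^sup>2 * r\<^sup>2"
    if t: "0 \<le> t" "t \<le> 1" for t
  proof -
    define yt where "yt = x + t *\<^sub>R (ys - x)"
    have ayt: "a yt = (1 - t) *\<^sub>R a x + t *\<^sub>R a ys"
      by (simp add: a_def yt_def matrix_vector_mult_scaleR algebra_simps)
    have "g yt \<le> (1 - t) * g x + t * g ys" unfolding g_def ayt using convex_sq[OF t] .
    then have 1: "(g x - g yt) / (2 * \<tau>) \<ge> t * D / (2 * \<tau>)"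
      using tau_pos unfolding D_def by (intro divide_right_mono) (auto simp: algebra_simps)
    have "(norm (yt - x))\<^sup>2 = t\<^sup>2 * (norm (ys - x))\<^sup>2" using t by (simp add: yt_def power_mult_distrib)
    also have "\<dots> \<le> t\<^sup>2 * r\<^sup>2" using nys by (intro mult_left_mono power_mono) auto
    finally have 2: "L / 2 * (norm (yt - x))\<^sup>2 \<le> L / 2 * t\<^sup>2 * r\<^sup>2" using L_pos
      by (simp add: mult.assoc)
    show ?thesis using lowb[of yt] 1 2 by linarith
  qed
  define s where "s = D / (2 * \<tau> * L * r\<^sup>2)"
  have Ds: "D / (2 * \<tau>) = L * r\<^sup>2 * s" unfolding s_def using tau_pos L_pos r by (simp add: field_simps)
  have s0: "s \<ge> 0" unfolding s_def using D0 tau_pos L_pos r by simp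
  have goal': "L * r\<^sup>2 * kappa s \<le> \<tau> / 2 + f2hat F x / (2 * \<tau>) - f1hat F T"
  proof (cases "s \<le> 1")
    case True
    have "s * D / (2 * \<tau>) = s * (L * r\<^sup>2 * s)" using Ds by (metis times_divide_eq_right)
    then have e: "s * D / (2 * \<tau>) - L / 2 * s\<^sup>2 * r\<^sup>2 = L * r\<^sup>2 * kappa s"
      using True by (simp add: kappa_def power2_eq_square algebra_simps)
    show ?thesis using stepb[of s] s0 True unfolding e by simp
  next
    case False
    have e: "1 * D / (2 * \<tau>) - L / 2 * 1\<^sup>2 * r\<^sup>2 = L * r\<^sup>2 * kappa s"
      using Ds False by (simp add: kappa_def algebra_simps)
    show ?thesis using stepb[of 1] unfolding e by simp
  qed
  then show "\<tau> / 2 + f2hat F x / (2 * \<tau>) - f1hat F (Tmap F J L \<tau> x)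
            \<ge> L * r\<^sup>2 * kappa (Delta F J r x / (2 * \<tau> * L * r\<^sup>2))"
    using Deq s_def T_def by simp
qed
end
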